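(* Let $\mathfrak g$ be of type $G_2$ and $\lambda,\mu\in P^+$ with $\min\{m_2,n_2\}=0$. Then in $\mathcal F_{\lambda,\mu}$: $$(x^-_{(3,1)}\otimes t)^{(s)}(x^-_{(1,0)}\otimes1)^{(r)}v=0\quad\text{for all }r,s\in\mathbb Z_+\text{ with }r+s>m_1+n_1,$$ $$(x^-_{(1,0)}\otimes1)^{(r)}(x^-_{(1,1)}\otimes t)^{(s)}v=0\quad\text{for all }r,s\in\mathbb Z_+\text{ with }r-s>m_1+n_1.$$
   Context: $\mathfrak g$ is the simple Lie algebra of type $G_2$ with Cartan subalgebra $\mathfrak h$, simple roots $\alpha_1$ (short), $\alpha_2$ (long), coroots $h_1,h_2$, positive roots written $(r_1,r_2)$ for $r_1\alpha_1+r_2\alpha_2$ (namely $(1,0),(0,1),(1,1),(2,1),(3,1),(3,2)$), coroots $h_\alpha$, Chevalley basis $\{x^\pm_\alpha,h_i\}$, $\mathfrak n^+=\mathrm{span}\{x^+_\alpha\}$, dominant weights $P^+$; $m_i=\lambda(h_i)$, $n_i=\mu(h_i)$; $x^{(s)}=x^s/s!$. $\mathcal F_{\lambda,\mu}$ is the cyclic $\mathbf U(\mathfrak g\otimes\mathbb C[t])$-module generated by $v\ne0$ with relations $(\mathfrak n^+\otimes\mathbb C[t])v=0$; $(h\otimes t^r)v=\delta_{r,0}(\lambda+\mu)(h)v$ ($h\in\mathfrak h$); and for each positive root $\alpha$: $(x^-_\alpha\otimes1)^{(\lambda+\mu)(h_\alpha)+1}v=0$, $(x^-_\alpha\otimes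 t)^{\min\{\lambda(h_\alpha),\mu(h_\alpha)\}+1}v=0$, $(x^-_\alpha\otimes t^r)v=0$ for $r\ge2$. *)

theory Defs
  imports Complex_Main
begin

text \<open>
  Lie algebra of type G2, given by a Chevalley basis and its structure constants.
  Roots are written r1 alpha1 + r2 alpha2 with alpha1 short, alpha2 long.
  Xp_r1r2 = x^+_(r1,r2), Xm_r1r2 = x^-_(r1,r2), H1, H2 = simple coroots h_1, h_2.
  The structure constants were computed from an explicit faithful 7-dimensional
  matrix realisation (Chevalley generators e1, e2, f1, f2 with Cartan matrix
  alpha_2(h_1) = -3, alpha_1(h_2) = -1), with
  [x^+_a, x^-_a] = h_a the coroot of a and all constants integral.
\<close>

datatype g2b = Xp10 | Xp01 | Xp11 | Xp21 | Xp31 | Xp32 | Xm10 | Xm01 | Xm11 | Xm21 | Xm31 | Xm32 | H1 | H2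

text \<open>Entry (a, b, c, k): the coefficient of basis vector c in [a, b] is k
  (entries not listed are 0).\<close>

definition g2_sc :: "(g2b \<times> g2b \<times> g2b \<times> int) list" where
  "g2_sc = [
    (Xp10, Xp01, Xp11, 1),
    (Xp10, Xp11, Xp21, 2),
    (Xp10, Xp21, Xp31, 3),
    (Xp10, Xm10, H1, 1),
    (Xp10, Xm11, Xm01, - 3),
    (Xp10, Xm21, Xm11, - 2),
    (Xp10, Xm31, Xm21, - 1),
    (Xp10, H1, Xp10, - 2),
    (Xp10, H2, Xp10, 1),
    (Xp01, Xp10, Xp11, - 1),
    (Xp01, Xp31, Xp32, 1),
    (Xp01, Xm01, H2, 1),
    (Xp01, Xm11, Xm10, 1),
    (Xp01, Xm32, Xm31, - 1),
    (Xp01, H1, Xp01, 3),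
    (Xp01, H2, Xp01, - 2),
    (Xp11, Xp10, Xp21, - 2),
    (Xp11, Xp21, Xp32, - 3),
    (Xp11, Xm10, Xp01, - 3),
    (Xp11, Xm01, Xp10, 1),
    (Xp11, Xm11, H1, 1),
    (Xp11, Xm11, H2, 3),
    (Xp11, Xm21, Xm10, 2),
    (Xp11, Xm32, Xm21, 1),
    (Xp11, H1, Xp11, 1),
    (Xp11, H2, Xp11, - 1),
    (Xp21, Xp10, Xp31, - 3),
    (Xp21, Xp11, Xp32, 3),
    (Xp21, Xm10, Xp11, - 2),
    (Xp21, Xm11, Xp10, 2),
    (Xp21, Xm21, H1, 2),
    (Xp21, Xm21, H2, 3),
    (Xp21, Xm31, Xm10, 1),
    (Xp21, Xm32, Xm11, - 1),
    (Xp21, H1, Xp21, - 1),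
    (Xp31, Xp01, Xp32, - 1),
    (Xp31, Xm10, Xp21, - 1),
    (Xp31, Xm21, Xp10, 1),
    (Xp31, Xm31, H1, 1),
    (Xp31, Xm31, H2, 1),
    (Xp31, Xm32, Xm01, 1),
    (Xp31, H1, Xp31, - 3),
    (Xp31, H2, Xp31, 1),
    (Xp32, Xm01, Xp31, - 1),
    (Xp32, Xm11, Xp21, 1),
    (Xp32, Xm21, Xp11, - 1),
    (Xp32, Xm31, Xp01, 1),
    (Xp32, Xm32, H1, 1),
    (Xp32, Xm32, H2, 2),
    (Xp32, H2, Xp32, - 1),
    (Xm10, Xp10, H1, - 1),
    (Xm10, Xp11, Xp01, 3),
    (Xm10, Xp21, Xp11, 2),
    (Xm10, Xp31, Xp21, 1),
    (Xm10, Xm01, Xm11, - 1),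
    (Xm10, Xm11, Xm21, - 2),
    (Xm10, Xm21, Xm31, - 3),
    (Xm10, H1, Xm10, 2),
    (Xm10, H2, Xm10, - 1),
    (Xm01, Xp01, H2, - 1),
    (Xm01, Xp11, Xp10, - 1),
    (Xm01, Xp32, Xp31, 1),
    (Xm01, Xm10, Xm11, 1),
    (Xm01, Xm31, Xm32, - 1),
    (Xm01, H1, Xm01, - 3),
    (Xm01, H2, Xm01, 2),
    (Xm11, Xp10, Xm01, 3),
    (Xm11, Xp01, Xm10, - 1),
    (Xm11, Xp11, H1, - 1),
    (Xm11, Xp11, H2, - 3),
    (Xm11, Xp21, Xp10, - 2),
    (Xm11, Xp32, Xp21, - 1),
    (Xm11, Xm10, Xm21, 2),
    (Xm11, Xm21, Xm32, 3),
    (Xm11, H1, Xm11, - 1),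
    (Xm11, H2, Xm11, 1),
    (Xm21, Xp10, Xm11, 2),
    (Xm21, Xp11, Xm10, - 2),
    (Xm21, Xp21, H1, - 2),
    (Xm21, Xp21, H2, - 3),
    (Xm21, Xp31, Xp10, - 1),
    (Xm21, Xp32, Xp11, 1),
    (Xm21, Xm10, Xm31, 3),
    (Xm21, Xm11, Xm32, - 3),
    (Xm21, H1, Xm21, 1),
    (Xm31, Xp10, Xm21, 1),
    (Xm31, Xp21, Xm10, - 1),
    (Xm31, Xp31, H1, - 1),
    (Xm31, Xp31, H2, - 1),
    (Xm31, Xp32, Xp01, - 1),
    (Xm31, Xm01, Xm32, 1),
    (Xm31, H1, Xm31, 3),
    (Xm31, H2, Xm31, - 1),
    (Xm32, Xp01, Xm31, 1),
    (Xm32, Xp11, Xm21, - 1),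
    (Xm32, Xp21, Xm11, 1),
    (Xm32, Xp31, Xm01, - 1),
    (Xm32, Xp32, H1, - 1),
    (Xm32, Xp32, H2, - 2),
    (Xm32, H2, Xm32, 1),
    (H1, Xp10, Xp10, 2),
    (H1, Xp01, Xp01, - 3),
    (H1, Xp11, Xp11, - 1),
    (H1, Xp21, Xp21, 1),
    (H1, Xp31, Xp31, 3),
    (H1, Xm10, Xm10, - 2),
    (H1, Xm01, Xm01, 3),
    (H1, Xm11, Xm11, 1),
    (H1, Xm21, Xm21, - 1),
    (H1, Xm31, Xm31, - 3),
    (H2, Xp10, Xp10, - 1),
    (H2, Xp01, Xp01, 2),
    (H2, Xp11, Xp11, 1),
    (H2, Xp31, Xp31, - 1),
    (H2, Xp32, Xp32, 1),
    (H2, Xm10, Xm10, 1),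
    (H2, Xm01, Xm01, - 2),
    (H2, Xm11, Xm11, - 1),
    (H2, Xm31, Xm31, 1),
    (H2, Xm32, Xm32, - 1)
  ]"

definition g2_br :: "g2b \<Rightarrow> g2b \<Rightarrow> (g2b \<times> int) list" where
  "g2_br a b = [(c, k). (a', b', c, k) \<leftarrow> g2_sc, a' = a, b' = b]"

datatype proot = R10 | R01 | R11 | R21 | R31 | R32

fun xp :: "proot \<Rightarrow> g2b" where
  "xp R10 = Xp10" | "xp R01 = Xp01" | "xp R11 = Xp11"
| "xp R21 = Xp21" | "xp R31 = Xp31" | "xp R32 = Xp32"

fun xm :: "proot \<Rightarrow> g2b" where
  "xm R10 = Xm10" | "xm R01 = Xm01" | "xm R11 = Xm11"
| "xm R21 = Xm21" | "xm R31 = Xm31" | "xm R32 = Xm32"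

text \<open>Coroot h_alpha = c1 h_1 + c2 h_2; returns (c1, c2).\<close>

fun coroot :: "proot \<Rightarrow> nat \<times> nat" where
  "coroot R10 = (1, 0)" | "coroot R01 = (0, 1)" | "coroot R11 = (1, 3)"
| "coroot R21 = (2, 3)" | "coroot R31 = (1, 1)" | "coroot R32 = (1, 2)"

text \<open>For a dominant weight lambda with lambda(h_1) = m1, lambda(h_2) = m2:
  the value lambda(h_alpha).\<close>

definition wt_on :: "nat \<Rightarrow> nat \<Rightarrow> proot \<Rightarrow> nat" where
  "wt_on m1 m2 a = fst (coroot a) * m1 + snd (coroot a) * m2"

text \<open>A representation of the current algebra g (x) C[t] on a complex vector
  space 'v (scalar multiplication sc): rho a r is the action of a (x) t^r.\<close>

definition current_rep ::
  "(complex \<Rightarrow> 'v::ab_group_add \<Rightarrow> 'v) \<Rightarrow> (g2b \<Rightarrow> nat \<Rightarrow> 'v \<Rightarrow> 'v) \<Rightarrow> bool" where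
  "current_rep sc \<rho> \<longleftrightarrow>
     vector_space sc \<and>
     (\<forall>a r. Vector_Spaces.linear sc sc (\<rho> a r)) \<and>
     (\<forall>a b r s x. \<rho> a r (\<rho> b s x) - \<rho> b s (\<rho> a r x)
        = sum_list (map (\<lambda>(c, k). sc (of_int k) (\<rho> c (r + s) x)) (g2_br a b)))"

definition divpow :: "(complex \<Rightarrow> 'v \<Rightarrow> 'v) \<Rightarrow> ('v \<Rightarrow> 'v) \<Rightarrow> nat \<Rightarrow> 'v \<Rightarrow> 'v" where
  "divpow sc f s x = sc (1 / of_nat (fact s)) ((f ^^ s) x)"

text \<open>The defining relations of F_{lambda,mu} on the vector v, where
  lambda(h_i) = m_i, mu(h_i) = n_i.\<close>

definition F_rels ::
  "(complex \<Rightarrow> 'v::ab_group_add \<Rightarrow> 'v) \<Rightarrow> (g2b \<Rightarrow> nat \<Rightarrow> 'v \<Rightarrow> 'v) \<Rightarrow>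
   nat \<Rightarrow> nat \<Rightarrow> nat \<Rightarrow> nat \<Rightarrow> 'v \<Rightarrow> bool" where
  "F_rels sc \<rho> m1 m2 n1 n2 v \<longleftrightarrow>
     (\<forall>a r. \<rho> (xp a) r v = 0) \<and>
     (\<forall>r. \<rho> H1 r v = (if r = 0 then sc (of_nat (m1 + n1)) v else 0)) \<and>
     (\<forall>r. \<rho> H2 r v = (if r = 0 then sc (of_nat (m2 + n2)) v else 0)) \<and>
     (\<forall>a. divpow sc (\<rho> (xm a) 0) (wt_on (m1 + n1) (m2 + n2) a + 1) v = 0) \<and>
     (\<forall>a. divpow sc (\<rho> (xm a) 1) (min (wt_on m1 m2 a) (wt_on n1 n2 a) + 1) v = 0) \<and>
     (\<forall>a r. 2 \<le> r \<longrightarrow> \<rho> (xm a) r v = 0)"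

end

theory Submission
  imports Defs
begin
declare One_nat_def [simp del]

locale g2ctx =
  fixes sc :: "complex \<Rightarrow> 'v::ab_group_add \<Rightarrow> 'v"
    and \<rho> :: "g2b \<Rightarrow> nat \<Rightarrow> 'v \<Rightarrow> 'v"
  assumes cr: "current_rep sc \<rho>"
begin

lemma vs: "vector_space sc" using cr by (simp add: current_rep_def)

sublocale vector_space sc by (rule vs)

lemma rho_add: "\<rho> a r (x + y) = \<rho> a r x + \<rho> a r y"
  using cr by (simp add: current_rep_def Vector_Spaces.linear_iff)
lemma rho_scale: "\<rho> a r (sc c x) = sc c (\<rho> a r x)"
  using cr by (simp add: current_rep_def Vector_Spaces.linear_iff)
lemma rho_zero: "\<rho> a r 0 = 0"
  using rho_add[of a r 0 0] by simp
lemma brk: "\<rho> a r (\<rho> b s x) = \<rho> b s (\<rho> a r x) + sum_list (map (\<lambda>(c, k). sc (of_int k) (\<rho> c (r + s) x)) (g2_br a b))"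
  using cr unfolding current_rep_def by (metis add.commute diff_eq_eq)

lemma pow_zero: "(\<rho> a r ^^ n) 0 = 0"
  by (induction n) (simp_all add: rho_zero)
lemma pow_scale: "(\<rho> a r ^^ n) (sc c x) = sc c ((\<rho> a r ^^ n) x)"
  by (induction n) (simp_all add: rho_scale)

lemma sum_zero: "(\<And>c. \<rho> c t x = 0) \<Longrightarrow> sum_list (map (\<lambda>(c,k). sc (of_int k) (\<rho> c t x)) L) = 0"
  by (induction L) auto

abbreviation "fE \<equiv> \<rho> Xp10 0"
abbreviation "fF \<equiv> \<rho> Xm10 0"
abbreviation "fH \<equiv> \<rho> H1 0"
abbreviation "fZ \<equiv> \<rho> Xm31 1"
abbreviation "fY \<equiv> \<rho> Xm21 1"
abbreviation "fA \<equiv> \<rho> Xm11 1"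
abbreviation "fB \<equiv> \<rho> Xm01 1"

lemma br_EF: "fE (fF x) = fF (fE x) + fH x"
  using brk[of Xp10 0 Xm10 0 x] by (simp add: g2_br_def g2_sc_def)
lemma br_HE: "fH (fE x) = fE (fH x) + sc 2 (fE x)"
  using brk[of H1 0 Xp10 0 x] by (simp add: g2_br_def g2_sc_def)
lemma br_HF: "fH (fF x) = fF (fH x) + sc (-2) (fF x)"
  using brk[of H1 0 Xm10 0 x] by (simp add: g2_br_def g2_sc_def)
lemma br_FZ: "fF (fZ x) = fZ (fF x)"
  using brk[of Xm10 0 Xm31 1 x] by (simp add: g2_br_def g2_sc_def)
lemma br_HZ: "fH (fZ x) = fZ (fH x) + sc (-3) (fZ x)"
  using brk[of H1 0 Xm31 1 x] by (simp add: g2_br_def g2_sc_def)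
lemma br_HA: "fH (fA x) = fA (fH x) + fA x"
  using brk[of H1 0 Xm11 1 x] by (simp add: g2_br_def g2_sc_def)
lemma br_FY: "fF (fY x) = fY (fF x) + sc (-3) (fZ x)"
  using brk[of Xm10 0 Xm21 1 x] by (simp add: g2_br_def g2_sc_def)
lemma br_FA: "fF (fA x) = fA (fF x) + sc (-2) (fY x)"
  using brk[of Xm10 0 Xm11 1 x] by (simp add: g2_br_def g2_sc_def)
lemma br_EZ: "fE (fZ x) = fZ (fE x) + sc (-1) (fY x)"
  using brk[of Xp10 0 Xm31 1 x] by (simp add: g2_br_def g2_sc_def)
lemma br_EY: "fE (fY x) = fY (fE x) + sc (-2) (fA x)"
  using brk[of Xp10 0 Xm21 1 x] by (simp add: g2_br_def g2_sc_def)
lemma br_EA: "fE (fA x) = fA (fE x) + sc (-3) (fB x)"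
  using brk[of Xp10 0 Xm11 1 x] by (simp add: g2_br_def g2_sc_def)
lemma br_BA: "fB (fA x) = fA (fB x)"
  using brk[of Xm01 1 Xm11 1 x] by (simp add: g2_br_def g2_sc_def)
lemma br_BY: "fB (fY x) = fY (fB x)"
  using brk[of Xm01 1 Xm21 1 x] by (simp add: g2_br_def g2_sc_def)
lemma br_BZ: "fB (fZ x) = fZ (fB x) + sc (-1) (\<rho> Xm32 2 x)"
  using brk[of Xm01 1 Xm31 1 x] by (simp add: g2_br_def g2_sc_def numeral_2_eq_2)

lemma wtF: "fH u = sc (of_int k) u \<Longrightarrow> fH ((fF^^n) u) = sc (of_int (k - 2 * int n)) ((fF^^n) u)"
proof (induction n)
  case 0 then show ?case by simp
next
  case (Suc n)
  have "fH ((fF^^Suc n) u) = fF (fH ((fF^^n) u)) + sc (-2) (fF ((fF^^n) u))"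
    by (simp add: br_HF)
  also have "\<dots> = sc (of_int (k - 2 * int n)) (fF ((fF^^n) u)) + sc (-2) (fF ((fF^^n) u))"
    by (simp only: Suc.IH[OF Suc.prems] rho_scale)
  also have "\<dots> = sc (of_int (k - 2 * int n) + (-2)) (fF ((fF^^n) u))"
    by (rule scale_left_distrib[symmetric])
  finally show ?case by simp
qed

lemma eF: "fH u = sc (of_int k) u \<Longrightarrow>
  fE (fF ((fF^^n) u)) = fF ((fF^^n) (fE u)) + sc (of_int ((int n + 1) * (k - int n))) ((fF^^n) u)"
proof (induction n)
  case 0 then show ?case by (simp add: br_EF)
next
  case (Suc n)
  have "fE (fF ((fF^^Suc n) u)) = fF (fE ((fF^^Suc n) u)) + fH ((fF^^Suc n) u)"
    by (rule br_EF)
  also have "\<dots> = fF (fF ((fF^^n) (fE u)) + sc (of_int ((int n + 1) * (k - int n))) ((fF^^n) u))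
      + sc (of_int (k - 2 * int (Suc n))) ((fF^^Suc n) u)"
    using Suc wtF[OF Suc.prems, of "Suc n"] by simp
  also have "\<dots> = fF (fF ((fF^^n) (fE u))) + sc (of_int ((int n + 1) * (k - int n)) + of_int (k - 2 * int (Suc n))) (fF ((fF^^n) u))"
    by (simp add: rho_add rho_scale scale_left_distrib add.assoc)
  also have "of_int ((int n + 1) * (k - int n)) + of_int (k - 2 * int (Suc n)) = (of_int ((int (Suc n) + 1) * (k - int (Suc n))) :: complex)"
    by (simp add: algebra_simps)
  finally show ?case by simp
qed

lemma sl2A: "\<lbrakk>fH u = sc (of_int k) u; (fE^^Suc p) u = 0; (fF^^M) u = 0; int r > k + int p\<rbrakk> \<Longrightarrow> (fF^^r) u = 0"
proof (induction p arbitrary: u k M r)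
  case (0 u k M r)
  have w: "fE u = 0" using "0.prems"(2) by simp
  have big: "\<And>r. M \<le> r \<Longrightarrow> (fF^^r) u = 0"
  proof -
    fix r assume "M \<le> r"
    then have "(fF^^r) u = (fF^^(r-M)) ((fF^^M) u)" by (metis funpow_add le_add_diff_inverse2 comp_apply)
    then show "(fF^^r) u = 0" using "0.prems"(3) by (simp add: pow_zero)
  qed
  have "\<forall>r. int r > k \<longrightarrow> M \<le> r + d \<longrightarrow> (fF^^r) u = 0" for d
  proof (induction d)
    case 0 then show ?case using big by simp
  next
    case (Suc d)
    show ?case
    proof (intro allI impI)
      fix r assume r: "int r > k" "M \<le> r + Suc d"
      have "(fF^^Suc r) u = 0" using Suc.IH[rule_format, of "Suc r"] r by simp
      then have "0 = fE (fF ((fF^^r) u))" by (simp add: rho_zero)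
      also have "\<dots> = sc (of_int ((int r + 1) * (k - int r))) ((fF^^r) u)"
        using eF[OF "0.prems"(1), of r] w by (simp add: pow_zero rho_zero)
      finally have "sc (of_int ((int r + 1) * (k - int r))) ((fF^^r) u) = 0" by simp
      moreover have "(of_int ((int r + 1) * (k - int r)) :: complex) \<noteq> 0"
        unfolding of_int_eq_0_iff using r by simp
      ultimately show "(fF^^r) u = 0" by (metis scale_eq_0_iff)
    qed
  qed
  then show ?case using "0.prems"(4) by (metis add.commute le_add2 add_0 of_nat_0)
next
  case (Suc p u k M r)
  note P = Suc.prems
  define w where "w = fE u"
  have hw: "fH w = sc (of_int (k + 2)) w"
    unfolding w_def using Suc.prems(1) by (simp add: br_HE rho_scale scale_left_distrib)
  have "(fF^^Suc M) u = 0" using Suc.prems(3) by (simp add: rho_zero)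
  then have fw: "(fF^^Suc M) w = 0"
    using eF[OF Suc.prems(1), of M] Suc.prems(3) unfolding w_def by (simp add: rho_zero)
  have ew: "(fE^^Suc p) w = 0" using Suc.prems(2) unfolding w_def by (simp only: funpow_Suc_right comp_apply)
  have wk: "\<And>r'. int r' > k + int p + 2 \<Longrightarrow> (fF^^r') w = 0"
    using Suc.IH[OF hw ew fw] by simp
  have big: "\<And>r. M \<le> r \<Longrightarrow> (fF^^r) u = 0"
  proof -
    fix r assume "M \<le> r"
    then have "(fF^^r) u = (fF^^(r-M)) ((fF^^M) u)" by (metis funpow_add le_add_diff_inverse2 comp_apply)
    then show "(fF^^r) u = 0" using Suc.prems(3) by (simp add: pow_zero)
  qed
  have "\<forall>r. int r > k + int (Suc p) \<longrightarrow> M \<le> r + d \<longrightarrow> (fF^^r) u = 0" for d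
  proof (induction d)
    case 0 then show ?case using big by simp
  next
    case (Suc d)
    show ?case
    proof (intro allI impI)
      fix r assume r: "int r > k + int (Suc p)" "M \<le> r + Suc d"
      have "(fF^^Suc r) u = 0" using Suc.IH[rule_format, of "Suc r"] r by simp
      then have "0 = fE (fF ((fF^^r) u))" by (simp add: rho_zero)
      also have "\<dots> = fF ((fF^^r) w) + sc (of_int ((int r + 1) * (k - int r))) ((fF^^r) u)"
        using eF[OF P(1), of r] unfolding w_def by simp
      also have "fF ((fF^^r) w) = 0" using wk[of "Suc r"] r by simp
      finally have "sc (of_int ((int r + 1) * (k - int r))) ((fF^^r) u) = 0" by simp
      moreover have "(of_int ((int r + 1) * (k - int r)) :: complex) \<noteq> 0"
        unfolding of_int_eq_0_iff using r by simp
      ultimately show "(fF^^r) u = 0" by (metis scale_eq_0_iff)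
    qed
  qed
  then show ?case using Suc.prems(4) by (metis add.commute le_add2)
qed

end

locale g2mod = g2ctx sc \<rho> for sc :: "complex \<Rightarrow> 'v::ab_group_add \<Rightarrow> 'v" and \<rho> +
  fixes v :: 'v and N :: nat
  assumes hv: "\<rho> H1 0 v = sc (of_nat N) v"
    and ev: "\<rho> Xp10 0 v = 0"
    and fv: "(\<rho> Xm10 0 ^^ Suc N) v = 0"
    and bv: "\<rho> Xm01 1 v = 0"
    and d2v: "\<And>c r. 2 \<le> r \<Longrightarrow> \<rho> c r v = 0"
begin

lemma fv_big: "N < m \<Longrightarrow> (fF^^m) v = 0"
proof -
  assume "N < m"
  then have "(fF^^m) v = (fF^^(m - Suc N)) ((fF^^Suc N) v)"
    by (metis Suc_leI funpow_add le_add_diff_inverse2 comp_apply)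
  then show ?thesis using fv by (simp add: pow_zero)
qed

inductive G2 :: "nat \<Rightarrow> 'v \<Rightarrow> bool" where
  base: "N + 1 \<le> m + n \<Longrightarrow> G2 n ((fF^^m) v)"
| gZ: "G2 n x \<Longrightarrow> G2 n (fZ x)"
| gY: "G2 n x \<Longrightarrow> G2 (Suc n) (fY x)"
| gA: "G2 n x \<Longrightarrow> G2 (Suc (Suc n)) (fA x)"
| g0: "G2 n 0"
| gadd: "G2 n x \<Longrightarrow> G2 n y \<Longrightarrow> G2 n (x + y)"
| gsc: "G2 n x \<Longrightarrow> G2 n (sc c x)"
| gmono: "G2 n x \<Longrightarrow> G2 (Suc n) x"

lemma G2_mono: "G2 n x \<Longrightarrow> n \<le> m \<Longrightarrow> G2 m x"
proof -
  assume a: "G2 n x" "n \<le> m"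
  have "G2 (n + d) x" for d by (induction d) (simp_all add: a gmono)
  then show ?thesis using a(2) by (metis le_add_diff_inverse)
qed

lemma G2_zero: "G2 n x \<Longrightarrow> n = 0 \<Longrightarrow> x = 0"
proof (induction rule: G2.induct)
  case (base m n) then show ?case using fv_big[of m] by simp
qed (simp_all add: rho_zero)

lemma G2_F: "G2 n x \<Longrightarrow> G2 (n - 1) (fF x)"
proof (induction rule: G2.induct)
  case (base m n)
  have "G2 (n - 1) ((fF^^Suc m) v)" by (rule G2.base) (use base in arith)
  then show ?case by simp
next
  case (gZ n x) then show ?case by (simp add: br_FZ G2.gZ)
next
  case (gY n x)
  show ?case
  proof (cases "n = 0")
    case True then have "x = 0" using G2_zero gY.hyps by blast
    then show ?thesis by (simp add: rho_zero G2.g0)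
  next
  case False
  have "G2 n (fY (fF x))" using G2.gY[OF gY.IH] by (rule G2_mono) (use False in arith)
  moreover have "G2 n (sc (-3) (fZ x))" by (intro G2.gsc G2.gZ gY.hyps)
  ultimately show ?thesis by (simp add: br_FY G2.gadd del: scale_minus_left)
  qed
next
  case (gA n x)
  show ?case
  proof (cases "n = 0")
    case True then have "x = 0" using G2_zero gA.hyps by blast
    then show ?thesis by (simp add: rho_zero G2.g0)
  next
  case False
  have "G2 (Suc n) (fA (fF x))" using G2.gA[OF gA.IH] by (rule G2_mono) (use False in arith)
  moreover have "G2 (Suc n) (sc (-2) (fY x))" by (intro G2.gsc G2.gY gA.hyps)
  ultimately show ?thesis by (simp add: br_FA G2.gadd del: scale_minus_left)
  qed
next
  case (g0 n) then show ?case by (simp add: rho_zero G2.g0)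
next
  case (gadd n x y) then show ?case by (simp add: rho_add G2.gadd)
next
  case (gsc n x c) then show ?case by (simp add: rho_scale G2.gsc)
next
  case (gmono n x) then show ?case using G2_mono by fastforce
qed

lemma G2_kill: "G2 n x \<Longrightarrow> (fF^^n) x = 0"
proof (induction n arbitrary: x)
  case 0 then show ?case using G2_zero by simp
next
  case (Suc n)
  have "G2 n (fF x)" using G2_F[OF Suc.prems] by simp
  then show ?case using Suc.IH by (simp add: funpow_Suc_right del: funpow.simps)
qed

lemma A_G2: "G2 (N + 1 + 2 * s) ((fA^^s) v)"
proof (induction s)
  case 0 show ?case using G2.base[of 0 "N+1"] by simp
next
  case (Suc s) then show ?case using G2.gA by fastforce
qed

lemma BA: "fB ((fA^^s) v) = 0"
  by (induction s) (simp_all add: bv br_BA rho_zero)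

lemma EA: "fE ((fA^^s) v) = 0"
  by (induction s) (simp_all add: ev br_EA BA rho_zero)

lemma HA: "fH ((fA^^s) v) = sc (of_int (int N + int s)) ((fA^^s) v)"
proof (induction s)
  case 0 show ?case using hv by simp
next
  case (Suc s)
  have "fH ((fA^^Suc s) v) = fA (fH ((fA^^s) v)) + fA ((fA^^s) v)" by (simp add: br_HA)
  also have "\<dots> = sc (of_int (int N + int s) + 1) (fA ((fA^^s) v))"
    by (simp only: Suc.IH rho_scale scale_left_distrib scale_one)
  finally show ?case by simp
qed

lemma part2: "int N < int r - int s \<Longrightarrow> (fF^^r) ((fA^^s) v) = 0"
  by (rule sl2A[OF HA, where p=0 and M="N + 1 + 2 * s"]) (simp_all add: EA G2_kill[OF A_G2])


inductive G1 :: "nat \<Rightarrow> 'v \<Rightarrow> bool" where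
  base: "G1 (Suc n) v"
| gZ: "G1 n x \<Longrightarrow> G1 (Suc (Suc n)) (fZ x)"
| gY: "G1 n x \<Longrightarrow> G1 (Suc n) (fY x)"
| gA: "G1 n x \<Longrightarrow> G1 n (fA x)"
| g0: "G1 n 0"
| gadd: "G1 n x \<Longrightarrow> G1 n y \<Longrightarrow> G1 n (x + y)"
| gsc: "G1 n x \<Longrightarrow> G1 n (sc c x)"
| gmono: "G1 n x \<Longrightarrow> G1 (Suc n) x"

lemma G1_mono: "G1 n x \<Longrightarrow> n \<le> m \<Longrightarrow> G1 m x"
proof -
  assume a: "G1 n x" "n \<le> m"
  have "G1 (n + d) x" for d by (induction d) (simp_all add: a gmono)
  then show ?thesis using a(2) by (metis le_add_diff_inverse)
qed

lemma G1_zero: "G1 n x \<Longrightarrow> n = 0 \<Longrightarrow> x = 0"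
  by (induction rule: G1.induct) (simp_all add: rho_zero)

lemma G1_d2: "G1 n x \<Longrightarrow> \<forall>c r. 2 \<le> r \<longrightarrow> \<rho> c r x = 0"
proof (induction rule: G1.induct)
  case (base n) then show ?case using d2v by blast
next
  case (gZ n x)
  show ?case
  proof (intro allI impI)
    fix c r assume r: "2 \<le> (r::nat)"
    have "\<rho> c r (fZ x) = fZ (\<rho> c r x) + sum_list (map (\<lambda>(c', k). sc (of_int k) (\<rho> c' (r + 1) x)) (g2_br c Xm31))"
      by (rule brk)
    also have "sum_list (map (\<lambda>(c', k). sc (of_int k) (\<rho> c' (r + 1) x)) (g2_br c Xm31)) = 0"
      by (rule sum_zero) (use gZ.IH r in simp)
    finally show "\<rho> c r (fZ x) = 0" using gZ.IH r by (simp add: rho_zero)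
  qed
next
  case (gY n x)
  show ?case
  proof (intro allI impI)
    fix c r assume r: "2 \<le> (r::nat)"
    have "\<rho> c r (fY x) = fY (\<rho> c r x) + sum_list (map (\<lambda>(c', k). sc (of_int k) (\<rho> c' (r + 1) x)) (g2_br c Xm21))"
      by (rule brk)
    also have "sum_list (map (\<lambda>(c', k). sc (of_int k) (\<rho> c' (r + 1) x)) (g2_br c Xm21)) = 0"
      by (rule sum_zero) (use gY.IH r in simp)
    finally show "\<rho> c r (fY x) = 0" using gY.IH r by (simp add: rho_zero)
  qed
next
  case (gA n x)
  show ?case
  proof (intro allI impI)
    fix c r assume r: "2 \<le> (r::nat)"
    have "\<rho> c r (fA x) = fA (\<rho> c r x) + sum_list (map (\<lambda>(c', k). sc (of_int k) (\<rho> c' (r + 1) x)) (g2_br c Xm11))"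
      by (rule brk)
    also have "sum_list (map (\<lambda>(c', k). sc (of_int k) (\<rho> c' (r + 1) x)) (g2_br c Xm11)) = 0"
      by (rule sum_zero) (use gA.IH r in simp)
    finally show "\<rho> c r (fA x) = 0" using gA.IH r by (simp add: rho_zero)
  qed
qed (simp_all add: rho_zero rho_add rho_scale)

lemma G1_B: "G1 n x \<Longrightarrow> fB x = 0"
proof (induction rule: G1.induct)
  case (gZ n x)
  have "\<rho> Xm32 2 x = 0" using G1_d2[OF gZ.hyps] by simp
  then show ?case using gZ.IH by (simp add: br_BZ rho_zero)
qed (simp_all add: bv br_BY br_BA rho_zero rho_add rho_scale)

lemma G1_E: "G1 n x \<Longrightarrow> G1 (n - 1) (fE x)"
proof (induction rule: G1.induct)
  case (base n) then show ?case by (simp add: ev G1.g0)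
next
  case (gZ n x)
  show ?case
  proof (cases "n = 0")
    case True then have "x = 0" using G1_zero gZ.hyps by blast
    then show ?thesis by (simp add: rho_zero G1.g0)
  next
    case False
    have "G1 (Suc n) (fZ (fE x))" using G1.gZ[OF gZ.IH] by (rule G1_mono) (use False in arith)
    moreover have "G1 (Suc n) (sc (-1) (fY x))" by (intro G1.gsc G1.gY gZ.hyps)
    ultimately show ?thesis by (simp add: br_EZ G1.gadd del: scale_minus_left)
  qed
next
  case (gY n x)
  show ?case
  proof (cases "n = 0")
    case True then have "x = 0" using G1_zero gY.hyps by blast
    then show ?thesis by (simp add: rho_zero G1.g0)
  next
    case False
    have "G1 n (fY (fE x))" using G1.gY[OF gY.IH] by (rule G1_mono) (use False in arith)
    moreover have "G1 n (sc (-2) (fA x))" by (intro G1.gsc G1.gA gY.hyps)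
    ultimately show ?thesis by (simp add: br_EY G1.gadd del: scale_minus_left)
  qed
next
  case (gA n x)
  then show ?case by (simp add: br_EA G1_B G1.gA rho_zero)
next
  case (g0 n) then show ?case by (simp add: rho_zero G1.g0)
next
  case (gadd n x y) then show ?case by (simp add: rho_add G1.gadd)
next
  case (gsc n x c) then show ?case by (simp add: rho_scale G1.gsc)
next
  case (gmono n x) then show ?case using G1_mono by fastforce
qed

lemma G1_kill: "G1 n x \<Longrightarrow> (fE^^n) x = 0"
proof (induction n arbitrary: x)
  case 0 then show ?case using G1_zero by simp
next
  case (Suc n)
  have "G1 n (fE x)" using G1_E[OF Suc.prems] by simp
  then show ?case using Suc.IH by (simp add: funpow_Suc_right del: funpow.simps)
qed

lemma Z_G1: "G1 (Suc (2 * s)) ((fZ^^s) v)"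
proof (induction s)
  case 0 show ?case using G1.base[of 0] by simp
next
  case (Suc s) then show ?case using G1.gZ by fastforce
qed

lemma HZ: "fH ((fZ^^s) v) = sc (of_int (int N - 3 * int s)) ((fZ^^s) v)"
proof (induction s)
  case 0 show ?case using hv by simp
next
  case (Suc s)
  have "fH ((fZ^^Suc s) v) = fZ (fH ((fZ^^s) v)) + sc (-3) (fZ ((fZ^^s) v))" by (simp add: br_HZ)
  also have "\<dots> = sc (of_int (int N - 3 * int s) + (-3)) (fZ ((fZ^^s) v))"
    by (simp only: Suc.IH rho_scale scale_left_distrib)
  finally show ?case by simp
qed

lemma FZ_pow: "(fF^^r) ((fZ^^s) x) = (fZ^^s) ((fF^^r) x)"
proof -
  have a: "fF ((fZ^^s) y) = (fZ^^s) (fF y)" for y by (induction s) (simp_all add: br_FZ)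
  show ?thesis by (induction r) (simp_all add: a)
qed

lemma part1: "N < r + s \<Longrightarrow> (fZ^^s) ((fF^^r) v) = 0"
proof -
  assume a: "N < r + s"
  have "(fF^^r) ((fZ^^s) v) = 0"
  proof (rule sl2A[OF HZ, where p="2*s" and M="Suc N"])
    show "(fE ^^ Suc (2 * s)) ((fZ ^^ s) v) = 0" by (rule G1_kill[OF Z_G1])
    show "(fF ^^ Suc N) ((fZ ^^ s) v) = 0" by (simp only: FZ_pow fv pow_zero)
    show "int N - 3 * int s + int (2 * s) < int r" using a by simp
  qed
  then show ?thesis by (simp add: FZ_pow)
qed

end

theorem lemma6p1:
  fixes sc :: "complex \<Rightarrow> 'v::ab_group_add \<Rightarrow> 'v"
    and \<rho> :: "g2b \<Rightarrow> nat \<Rightarrow> 'v \<Rightarrow> 'v"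
    and v :: 'v
    and m1 m2 n1 n2 :: nat
  assumes "min m2 n2 = 0"
    and "current_rep sc \<rho>"
    and "F_rels sc \<rho> m1 m2 n1 n2 v"
  shows "(\<forall>r s. r + s > m1 + n1 \<longrightarrow>
            divpow sc (\<rho> Xm31 1) s (divpow sc (\<rho> Xm10 0) r v) = 0) \<and>
         (\<forall>r s. int r - int s > int (m1 + n1) \<longrightarrow>
            divpow sc (\<rho> Xm10 0) r (divpow sc (\<rho> Xm11 1) s v) = 0)"
proof -
  interpret g2ctx sc \<rho> by unfold_locales (rule assms(2))
  note R = assms(3)[unfolded F_rels_def]
  have hv: "\<rho> H1 0 v = sc (of_nat (m1 + n1)) v" using R by simp
  have ev: "\<rho> Xp10 0 v = 0" using R by (metis xp.simps(1))
  have "divpow sc (\<rho> (xm R10) 0) (wt_on (m1 + n1) (m2 + n2) R10 + 1) v = 0" using R by blast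
  moreover have "wt_on (m1 + n1) (m2 + n2) R10 + 1 = Suc (m1 + n1)" by (simp add: wt_on_def)
  ultimately have "sc (1 / of_nat (fact (Suc (m1 + n1)))) ((\<rho> Xm10 0 ^^ Suc (m1 + n1)) v) = 0"
    by (simp only: divpow_def xm.simps)
  moreover have "(1 / of_nat (fact (Suc (m1 + n1))) :: complex) \<noteq> 0" by (metis divide_eq_0_iff fact_nonzero of_nat_eq_0_iff one_neq_zero)
  ultimately have fv: "(\<rho> Xm10 0 ^^ Suc (m1 + n1)) v = 0" by (metis scale_eq_0_iff)
  have "divpow sc (\<rho> (xm R01) 1) (min (wt_on m1 m2 R01) (wt_on n1 n2 R01) + 1) v = 0" using R by blast
  then have bv: "\<rho> Xm01 1 v = 0" using assms(1) by (simp add: divpow_def wt_on_def One_nat_def)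
  have d2v: "\<rho> c r v = 0" if "2 \<le> r" for c r
  proof -
    have xp: "\<And>a. \<rho> (xp a) r v = 0" using R by blast
    have xm: "\<And>a. \<rho> (xm a) r v = 0" using R that by blast
    have "r \<noteq> 0" using that by simp
    then show ?thesis
      using xp[of R10] xp[of R01] xp[of R11] xp[of R21] xp[of R31] xp[of R32]
        xm[of R10] xm[of R01] xm[of R11] xm[of R21] xm[of R31] xm[of R32] R
      by (cases c) auto
  qed
  interpret g2mod sc \<rho> v "m1 + n1"
    by unfold_locales (use hv ev fv bv d2v in auto)
  show ?thesis
  proof (intro conjI allI impI)
    fix r s assume "r + s > m1 + n1"
    then show "divpow sc (\<rho> Xm31 1) s (divpow sc (\<rho> Xm10 0) r v) = 0"
      using part1 by (simp add: divpow_def pow_scale)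
  next
    fix r s assume "int r - int s > int (m1 + n1)"
    then show "divpow sc (\<rho> Xm10 0) r (divpow sc (\<rho> Xm11 1) s v) = 0"
      using part2 by (simp add: divpow_def pow_scale)
  qed
qed

end
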